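(* Let $n,k\ge 1$, $\lambda_2\ge 0$, let $A_1,A_2\in\mathbb{R}^{k\times k}$ be symmetric, $B_1,B_2\in\mathbb{R}^{n\times k}$, and let $W_P,W_Q\in\mathbb{R}^{n\times n}$ be symmetric with nonnegative entries, $D_P,D_Q$ the diagonal matrices with $(D_P)_{ii}=\sum_j (W_P)_{ij}$, $(D_Q)_{ii}=\sum_j (W_Q)_{ij}$, and $L_P=D_P-W_P$, $L_Q=D_Q-W_Q$. For $V=[v_{ij}]\in\mathbb{R}^{n\times k}$ define $$F(V)=\mathrm{Tr}\big(-2V^TB_1^+ + 2V^TB_1^- + VA_1^+V^T - VA_1^-V^T - 2V^TB_2^+ + 2V^TB_2^- + VA_2^+V^T - VA_2^-V^T + \lambda_2 V^TD_PV - \lambda_2 V^TW_PV + \lambda_2 V^TD_QV - \lambda_2 V^TW_QV\big),$$ and consider the problem $\min_V F(V)$ subject to $v_{ij}\ge 0$. Define the update $V\mapsto \mathcal{T}(V)$ by $$\mathcal{T}(V)_{ij}= v_{ij}\sqrt{\frac{\big(B_1^{+}+B_2^{+}+V(A_1^{-}+A_2^{-})+\lambda_2(W_P+W_Q)V\big)_{ij}}{\big(B_1^{-}+B_2^{-}+V(A_1^{+}+A_2^{+})+\lambda_2(D_P+D_Q)V\big)_{ij}}}.$$ Let $V^{(0)}$ have strictly positive entries and $V^{(t+1)}=\mathcal{T}(V^{(t)})$, and assume that at every iterate all numerator and denominator entries above are strictly positive. Then $F(V^{(t+1)})\le F(V^{(t)})$ for all $t\ge 0$, i.e. $F$ is monotonically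 non-increasing along the iteration. Moreover, if $V^{(t)}\to V^*$ and the denominator entries at $V^*$ are strictly positive, then $V^*$ satisfies the KKT complementary slackness condition $$\big(-2B_1-2B_2+2V^*(A_1+A_2)+2\lambda_2(L_P+L_Q)V^*\big)_{ij}\, v^*_{ij}=0\quad\text{for all } i,j.$$
   Context: For a real matrix $M$, $M^+$ and $M^-$ denote the entrywise parts $M^+_{ij}=(|M_{ij}|+M_{ij})/2$ and $M^-_{ij}=(|M_{ij}|-M_{ij})/2$, so $M=M^+-M^-$ with $M^+,M^-\ge 0$ entrywise. In the paper's application, $A_1=\mathrm{vec}(\mathbf U^{(P)})^T\mathrm{vec}(\mathbf U^{(P)})$, $A_2=\mathrm{vec}(\mathbf U^{(Q)})^T\mathrm{vec}(\mathbf U^{(Q)})$, $B_1=\mathrm{vec}(\mathbf X^{(P)})^T\mathrm{vec}(\mathbf U^{(P)})$, $B_2=\mathrm{vec}(\mathbf X^{(Q)})^T\mathrm{vec}(\mathbf U^{(Q)})$, where for a collection of matrices $\mathbf M=\{M_1,\dots,M_m\}$, $\mathrm{vec}(\mathbf M)$ is the matrix whose $i$-th column is the vectorization of $M_i$; $F(V)$ then equals, up to an additive constant independent of $V$, the TS-NMF objective as a function of $V$. *)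

theory Defs
  imports "HOL-Analysis.Analysis"
begin

definition mpos :: "real^'c^'r \<Rightarrow> real^'c^'r" where
  "mpos M = (\<chi> i j. (\<bar>M $ i $ j\<bar> + M $ i $ j) / 2)"

definition mneg :: "real^'c^'r \<Rightarrow> real^'c^'r" where
  "mneg M = (\<chi> i j. (\<bar>M $ i $ j\<bar> - M $ i $ j) / 2)"

definition degmat :: "real^'n^'n \<Rightarrow> real^'n^'n" where
  "degmat W = (\<chi> i j. if i = j then (\<Sum>l\<in>UNIV. W $ i $ l) else 0)"

text \<open>The objective F(V); the trace of the sum (of square matrices of
  sizes k and n) is written as the sum of traces.\<close>
definition tsF ::
  "real^'k^'k \<Rightarrow> real^'k^'k \<Rightarrow> real^'k^'n \<Rightarrow> real^'k^'n \<Rightarrow>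
   real^'n^'n \<Rightarrow> real^'n^'n \<Rightarrow> real \<Rightarrow> real^'k^'n \<Rightarrow> real" where
  "tsF A1 A2 B1 B2 WP WQ lam V =
     trace ((-2) *\<^sub>R (transpose V ** mpos B1)) + trace (2 *\<^sub>R (transpose V ** mneg B1))
   + trace (V ** mpos A1 ** transpose V) - trace (V ** mneg A1 ** transpose V)
   + trace ((-2) *\<^sub>R (transpose V ** mpos B2)) + trace (2 *\<^sub>R (transpose V ** mneg B2))
   + trace (V ** mpos A2 ** transpose V) - trace (V ** mneg A2 ** transpose V)
   + trace (lam *\<^sub>R (transpose V ** degmat WP ** V)) - trace (lam *\<^sub>R (transpose V ** WP ** V))
   + trace (lam *\<^sub>R (transpose V ** degmat WQ ** V)) - trace (lam *\<^sub>R (transpose V ** WQ ** V))"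

definition tsNum ::
  "real^'k^'k \<Rightarrow> real^'k^'k \<Rightarrow> real^'k^'n \<Rightarrow> real^'k^'n \<Rightarrow>
   real^'n^'n \<Rightarrow> real^'n^'n \<Rightarrow> real \<Rightarrow> real^'k^'n \<Rightarrow> real^'k^'n" where
  "tsNum A1 A2 B1 B2 WP WQ lam V =
     mpos B1 + mpos B2 + V ** (mneg A1 + mneg A2) + lam *\<^sub>R ((WP + WQ) ** V)"

definition tsDen ::
  "real^'k^'k \<Rightarrow> real^'k^'k \<Rightarrow> real^'k^'n \<Rightarrow> real^'k^'n \<Rightarrow>
   real^'n^'n \<Rightarrow> real^'n^'n \<Rightarrow> real \<Rightarrow> real^'k^'n \<Rightarrow> real^'k^'n" where
  "tsDen A1 A2 B1 B2 WP WQ lam V =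
     mneg B1 + mneg B2 + V ** (mpos A1 + mpos A2) + lam *\<^sub>R ((degmat WP + degmat WQ) ** V)"

definition tsUpd ::
  "real^'k^'k \<Rightarrow> real^'k^'k \<Rightarrow> real^'k^'n \<Rightarrow> real^'k^'n \<Rightarrow>
   real^'n^'n \<Rightarrow> real^'n^'n \<Rightarrow> real \<Rightarrow> real^'k^'n \<Rightarrow> real^'k^'n" where
  "tsUpd A1 A2 B1 B2 WP WQ lam V =
     (\<chi> i j. V $ i $ j * sqrt (tsNum A1 A2 B1 B2 WP WQ lam V $ i $ j
                                / tsDen A1 A2 B1 B2 WP WQ lam V $ i $ j))"

end

theory Submission
  imports Defs
begin

lemma quad_pos:
  fixes M :: "'a::finite \<Rightarrow> 'a \<Rightarrow> real" and x u :: "'a \<Rightarrow> real"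
  assumes sym: "\<And>p q. M p q = M q p" and nn: "\<And>p q. M p q \<ge> 0" and xp: "\<And>p. x p > 0"
  shows "(\<Sum>p\<in>UNIV. \<Sum>q\<in>UNIV. (x p * u p) * M p q * (x q * u q)) \<le> (\<Sum>p\<in>UNIV. (\<Sum>q\<in>UNIV. M p q * x q) * x p * (u p)^2)"
proof -
  have "(\<Sum>p\<in>UNIV. \<Sum>q\<in>UNIV. (x p * u p) * M p q * (x q * u q)) \<le> (\<Sum>p\<in>UNIV. \<Sum>q\<in>UNIV. M p q * x p * x q * ((u p)^2 + (u q)^2) / 2)"
  proof (intro sum_mono)
    fix p q
    have "u p * u q \<le> ((u p)^2 + (u q)^2) / 2" using sum_squares_bound[of "u p" "u q"] by (simp add: power2_eq_square)
    moreover have "M p q * x p * x q \<ge> 0" using nn xp by (simp add: less_imp_le)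
    ultimately have "M p q * x p * x q * (u p * u q) \<le> M p q * x p * x q * (((u p)^2 + (u q)^2) / 2)"
      by (rule mult_left_mono)
    then show "(x p * u p) * M p q * (x q * u q) \<le> M p q * x p * x q * ((u p)^2 + (u q)^2) / 2"
      by (simp add: algebra_simps)
  qed
  also have "\<dots> = (\<Sum>p\<in>UNIV. \<Sum>q\<in>UNIV. M p q * x p * x q * (u p)^2) / 2 + (\<Sum>p\<in>UNIV. \<Sum>q\<in>UNIV. M p q * x p * x q * (u q)^2) / 2"
    by (simp add: add_divide_distrib sum.distrib sum_divide_distrib distrib_left)
  also have "(\<Sum>p\<in>UNIV. \<Sum>q\<in>UNIV. M p q * x p * x q * (u q)^2) = (\<Sum>p\<in>UNIV. \<Sum>q\<in>UNIV. M p q * x p * x q * (u p)^2)"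
    by (subst sum.swap) (simp add: sym mult.commute mult.left_commute)
  also have "(\<Sum>p\<in>UNIV. \<Sum>q\<in>UNIV. M p q * x p * x q * (u p)^2) / 2 + (\<Sum>p\<in>UNIV. \<Sum>q\<in>UNIV. M p q * x p * x q * (u p)^2) / 2
     = (\<Sum>p\<in>UNIV. (\<Sum>q\<in>UNIV. M p q * x q) * x p * (u p)^2)"
    by (simp add: sum_distrib_right sum_distrib_left mult_ac)
  finally show ?thesis .
qed

lemma quad_neg:
  fixes M :: "'a::finite \<Rightarrow> 'a \<Rightarrow> real" and x u :: "'a \<Rightarrow> real"
  assumes sym: "\<And>p q. M p q = M q p" and nn: "\<And>p q. M p q \<ge> 0" and xp: "\<And>p. x p > 0"
    and up: "\<And>p. u p > 0"
  shows "(\<Sum>p\<in>UNIV. \<Sum>q\<in>UNIV. (x p * u p) * M p q * (x q * u q)) \<ge> (\<Sum>p\<in>UNIV. (\<Sum>q\<in>UNIV. M p q * x q) * x p * (1 + 2 * ln (u p)))"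
proof -
  have "(\<Sum>p\<in>UNIV. \<Sum>q\<in>UNIV. (x p * u p) * M p q * (x q * u q)) \<ge> (\<Sum>p\<in>UNIV. \<Sum>q\<in>UNIV. M p q * x p * x q * (1 + ln (u p) + ln (u q)))"
  proof (intro sum_mono)
    fix p q
    have "ln (u p * u q) \<le> u p * u q - 1" using up by (intro ln_le_minus_one) (simp add: up)
    hence "1 + ln (u p) + ln (u q) \<le> u p * u q" using up[of p] up[of q] ln_mult[of "u p" "u q"] by simp
    moreover have "M p q * x p * x q \<ge> 0" using nn xp by (simp add: less_imp_le)
    ultimately have "M p q * x p * x q * (1 + ln (u p) + ln (u q)) \<le> M p q * x p * x q * (u p * u q)"
      by (rule mult_left_mono)
    then show "M p q * x p * x q * (1 + ln (u p) + ln (u q)) \<le> (x p * u p) * M p q * (x q * u q)"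
      by (simp add: algebra_simps)
  qed
  also have "(\<Sum>p\<in>UNIV. \<Sum>q\<in>UNIV. M p q * x p * x q * (1 + ln (u p) + ln (u q))) =
     (\<Sum>p\<in>UNIV. \<Sum>q\<in>UNIV. M p q * x p * x q * (1/2 + ln (u p))) + (\<Sum>p\<in>UNIV. \<Sum>q\<in>UNIV. M p q * x p * x q * (1/2 + ln (u q)))"
    unfolding sum.distrib[symmetric] by (intro sum.cong refl) (simp add: algebra_simps)
  also have "(\<Sum>p\<in>UNIV. \<Sum>q\<in>UNIV. M p q * x p * x q * (1/2 + ln (u q))) = (\<Sum>p\<in>UNIV. \<Sum>q\<in>UNIV. M p q * x p * x q * (1/2 + ln (u p)))"
    by (subst sum.swap) (simp add: sym mult.commute mult.left_commute)
  also have "(\<Sum>p\<in>UNIV. \<Sum>q\<in>UNIV. M p q * x p * x q * (1/2 + ln (u p))) + (\<Sum>p\<in>UNIV. \<Sum>q\<in>UNIV. M p q * x p * x q * (1/2 + ln (u p)))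
     = (\<Sum>p\<in>UNIV. (\<Sum>q\<in>UNIV. M p q * x q) * x p * (1 + 2 * ln (u p)))"
  proof -
    have e: "\<And>p. (\<Sum>q\<in>UNIV. M p q * x p * x q * (1/2 + ln (u p))) = (\<Sum>q\<in>UNIV. M p q * x q) * x p * (1/2 + ln (u p))"
      by (simp only: sum_distrib_right) (simp add: mult_ac)
    show ?thesis unfolding e sum.distrib[symmetric] by (rule sum.cong) (auto simp: algebra_simps)
  qed
  finally show ?thesis .
qed

definition lin :: "real^'k^'n \<Rightarrow> real^'k^'n \<Rightarrow> real" where
  "lin B V = (\<Sum>i\<in>UNIV. \<Sum>j\<in>UNIV. V$i$j * B$i$j)"
definition qa :: "real^'k^'k \<Rightarrow> real^'k^'n \<Rightarrow> real" where
  "qa A V = (\<Sum>i\<in>UNIV. \<Sum>j\<in>UNIV. \<Sum>l\<in>UNIV. V$i$j * A$j$l * V$i$l)"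
definition qd :: "real^'n^'n \<Rightarrow> real^'k^'n \<Rightarrow> real" where
  "qd D V = (\<Sum>j\<in>UNIV. \<Sum>i\<in>UNIV. \<Sum>m\<in>UNIV. V$i$j * D$i$m * V$m$j)"

lemma tr_lin: "trace (c *\<^sub>R (transpose V ** B)) = c * lin B V"
  unfolding trace_def lin_def matrix_matrix_mult_def transpose_def
  apply (simp add: sum_distrib_left)
  by (rule sum.swap)

lemma tr_qa: "trace (V ** A ** transpose V) = qa A V"
  unfolding trace_def qa_def matrix_matrix_mult_def transpose_def
  apply (simp add: sum_distrib_right)
  by (rule sum.cong[OF refl], rule sum.swap)

lemma tr_qd: "trace (c *\<^sub>R (transpose V ** D ** V)) = c * qd D V"
  unfolding trace_def qd_def matrix_matrix_mult_def transpose_def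
  apply (simp add: sum_distrib_left sum_distrib_right)
  by (rule sum.cong[OF refl], rule sum.swap)

lemma lin_add: "lin (B + C) V = lin B V + lin C V"
  by (simp add: lin_def algebra_simps sum.distrib)
lemma qa_add: "qa (B + C) V = qa B V + qa C V"
  by (simp add: qa_def algebra_simps sum.distrib)
lemma qd_add: "qd (B + C) V = qd B V + qd C V"
  by (simp add: qd_def algebra_simps sum.distrib)

lemma tsF_expand: "tsF A1 A2 B1 B2 WP WQ lam V =
   -2 * lin (mpos B1 + mpos B2) V + 2 * lin (mneg B1 + mneg B2) V
   + qa (mpos A1 + mpos A2) V - qa (mneg A1 + mneg A2) V
   + lam * qd (degmat WP + degmat WQ) V - lam * qd (WP + WQ) V"
  unfolding tsF_def tr_lin tr_qa tr_qd lin_add qa_add qd_add by (simp add: algebra_simps)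

lemma key_ineq:
  fixes n d x :: real assumes "n > 0" "d > 0" "x > 0"
  shows "x * (d * ((sqrt (n/d))^2 - 1) - 2 * n * ln (sqrt (n/d))) \<le> 0"
proof -
  have s2: "(sqrt (n/d))^2 = n/d" using assms by simp
  have l: "2 * ln (sqrt (n/d)) = ln (n/d)" using assms by (simp add: ln_sqrt)
  have "ln (d/n) \<le> d/n - 1" using assms by (intro ln_le_minus_one) simp
  moreover have "ln (d/n) = - ln (n/d)" using assms by (simp add: ln_div)
  ultimately have "n * (- ln (n/d)) \<le> n * (d/n - 1)" using assms by (intro mult_left_mono) auto
  hence "n * (- ln (n/d)) \<le> d - n" using assms by (simp add: algebra_simps)
  hence "d * (n/d - 1) - n * ln (n/d) \<le> 0" using assms by (simp add: algebra_simps)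
  hence "d * ((sqrt (n/d))^2 - 1) - 2 * n * ln (sqrt (n/d)) \<le> 0"
  proof -
    have e: "2 * n * ln (sqrt (n/d)) = n * ln (n/d)" using l by (simp add: mult_ac)
    show ?thesis unfolding s2 e using \<open>d * (n/d - 1) - n * ln (n/d) \<le> 0\<close> by linarith
  qed
  thus ?thesis using assms by (simp add: mult_nonneg_nonpos)
qed

lemma sym_entry: "transpose A = A \<Longrightarrow> A $ i $ j = A $ j $ i"
  by (metis transpose_def vec_lambda_beta)

lemma step:
  fixes A1 A2 :: "real^'k^'k" and B1 B2 :: "real^'k^'n"
    and WP WQ :: "real^'n^'n" and lam :: real and X :: "real^'k^'n"
  assumes lam: "lam \<ge> 0"
    and symA1: "transpose A1 = A1" and symA2: "transpose A2 = A2"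
    and symWP: "transpose WP = WP" and symWQ: "transpose WQ = WQ"
    and nnWP: "\<forall>i j. WP $ i $ j \<ge> 0" and nnWQ: "\<forall>i j. WQ $ i $ j \<ge> 0"
    and Xp: "\<forall>i j. X $ i $ j > 0"
    and Np: "\<forall>i j. tsNum A1 A2 B1 B2 WP WQ lam X $ i $ j > 0"
    and Dp: "\<forall>i j. tsDen A1 A2 B1 B2 WP WQ lam X $ i $ j > 0"
  shows "tsF A1 A2 B1 B2 WP WQ lam (tsUpd A1 A2 B1 B2 WP WQ lam X) \<le> tsF A1 A2 B1 B2 WP WQ lam X"
proof -
  define N where "N = tsNum A1 A2 B1 B2 WP WQ lam X"
  define D where "D = tsDen A1 A2 B1 B2 WP WQ lam X"
  define U where "U i j = sqrt (N$i$j / D$i$j)" for i j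
  define Vn where "Vn = tsUpd A1 A2 B1 B2 WP WQ lam X"
  define Bp where "Bp = mpos B1 + mpos B2"
  define Bn where "Bn = mneg B1 + mneg B2"
  define Ap where "Ap = mpos A1 + mpos A2"
  define An where "An = mneg A1 + mneg A2"
  define Dg where "Dg = degmat WP + degmat WQ"
  define W where "W = WP + WQ"
  have Up: "U i j > 0" for i j using Np Dp by (simp add: U_def N_def D_def)
  have Vn: "Vn $ i $ j = X $ i $ j * U i j" for i j
    by (simp add: Vn_def tsUpd_def U_def N_def D_def)
  have Bpnn: "Bp $ i $ j \<ge> 0" for i j by (simp add: Bp_def mpos_def)
  have Bnnn: "Bn $ i $ j \<ge> 0" for i j by (simp add: Bn_def mneg_def)
  have Apnn: "Ap $ i $ j \<ge> 0" for i j by (simp add: Ap_def mpos_def)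
  have Annn: "An $ i $ j \<ge> 0" for i j by (simp add: An_def mneg_def)
  have Apsym: "Ap $ i $ j = Ap $ j $ i" for i j
    using sym_entry[OF symA1, of i j] sym_entry[OF symA2, of i j] by (simp add: Ap_def mpos_def)
  have Ansym: "An $ i $ j = An $ j $ i" for i j
    using sym_entry[OF symA1, of i j] sym_entry[OF symA2, of i j] by (simp add: An_def mneg_def)
  have Wnn: "W $ i $ j \<ge> 0" for i j using nnWP nnWQ by (simp add: W_def add_nonneg_nonneg)
  have Wsym: "W $ i $ j = W $ j $ i" for i j
    using sym_entry[OF symWP, of i j] sym_entry[OF symWQ, of i j] by (simp add: W_def)
  have Dgnn: "Dg $ i $ j \<ge> 0" for i j using nnWP nnWQ
    by (simp add: Dg_def degmat_def sum_nonneg add_nonneg_nonneg)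
  have Dgsym: "Dg $ i $ j = Dg $ j $ i" for i j by (simp add: Dg_def degmat_def)
  define cAp where "cAp i j = (\<Sum>l\<in>UNIV. Ap$j$l * X$i$l)" for i j
  define cAn where "cAn i j = (\<Sum>l\<in>UNIV. An$j$l * X$i$l)" for i j
  define cD where "cD i j = (\<Sum>m\<in>UNIV. Dg$i$m * X$m$j)" for i j
  define cW where "cW i j = (\<Sum>m\<in>UNIV. W$i$m * X$m$j)" for i j
  have Dent: "D $ i $ j = Bn $ i $ j + cAp i j + lam * cD i j" for i j
    unfolding D_def tsDen_def cAp_def cD_def Bn_def Ap_def Dg_def
    using Apsym[unfolded Ap_def]
    by (simp add: matrix_matrix_mult_def mult.commute)
  have Nent: "N $ i $ j = Bp $ i $ j + cAn i j + lam * cW i j" for i j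
    unfolding N_def tsNum_def cAn_def cW_def Bp_def An_def W_def
    using Ansym[unfolded An_def]
    by (simp add: matrix_matrix_mult_def mult.commute)
  have b1: "lin Bp Vn \<ge> (\<Sum>i\<in>UNIV. \<Sum>j\<in>UNIV. X$i$j * Bp$i$j * (1 + ln (U i j)))"
    unfolding lin_def Vn
  proof (intro sum_mono)
    fix i j
    have "ln (U i j) \<le> U i j - 1" using Up by (intro ln_le_minus_one) auto
    hence "1 + ln (U i j) \<le> U i j" by simp
    moreover have "X$i$j * Bp$i$j \<ge> 0" using Xp Bpnn by (simp add: less_imp_le)
    ultimately have "X$i$j * Bp$i$j * (1 + ln (U i j)) \<le> X$i$j * Bp$i$j * U i j" by (rule mult_left_mono)
    thus "X$i$j * Bp$i$j * (1 + ln (U i j)) \<le> X$i$j * U i j * Bp$i$j" by (simp add: mult_ac)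
  qed
  have b2: "lin Bn Vn \<le> (\<Sum>i\<in>UNIV. \<Sum>j\<in>UNIV. X$i$j * Bn$i$j * (((U i j)^2 + 1) / 2))"
    unfolding lin_def Vn
  proof (intro sum_mono)
    fix i j
    have "U i j \<le> ((U i j)^2 + 1) / 2" using sum_squares_bound[of "U i j" 1] by (simp add: power2_eq_square)
    moreover have "X$i$j * Bn$i$j \<ge> 0" using Xp Bnnn by (simp add: less_imp_le)
    ultimately have "X$i$j * Bn$i$j * U i j \<le> X$i$j * Bn$i$j * (((U i j)^2 + 1) / 2)" by (rule mult_left_mono)
    thus "X$i$j * U i j * Bn$i$j \<le> X$i$j * Bn$i$j * (((U i j)^2 + 1) / 2)" by (simp add: mult_ac)
  qed
  have b3: "qa Ap Vn \<le> (\<Sum>i\<in>UNIV. \<Sum>j\<in>UNIV. cAp i j * X$i$j * (U i j)^2)"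
    unfolding qa_def Vn cAp_def
    by (intro sum_mono quad_pos) (auto simp: Apsym Apnn Xp)
  have b4: "qa An Vn \<ge> (\<Sum>i\<in>UNIV. \<Sum>j\<in>UNIV. cAn i j * X$i$j * (1 + 2 * ln (U i j)))"
    unfolding qa_def Vn cAn_def
    by (intro sum_mono quad_neg) (auto simp: Ansym Annn Xp Up)
  have b5: "qd Dg Vn \<le> (\<Sum>i\<in>UNIV. \<Sum>j\<in>UNIV. cD i j * X$i$j * (U i j)^2)"
  proof -
    have "qd Dg Vn \<le> (\<Sum>j\<in>UNIV. \<Sum>i\<in>UNIV. cD i j * X$i$j * (U i j)^2)"
      unfolding qd_def Vn cD_def
      by (intro sum_mono quad_pos) (auto simp: Dgsym Dgnn Xp)
    thus ?thesis by (subst sum.swap)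
  qed
  have b6: "qd W Vn \<ge> (\<Sum>i\<in>UNIV. \<Sum>j\<in>UNIV. cW i j * X$i$j * (1 + 2 * ln (U i j)))"
  proof -
    have "qd W Vn \<ge> (\<Sum>j\<in>UNIV. \<Sum>i\<in>UNIV. cW i j * X$i$j * (1 + 2 * ln (U i j)))"
      unfolding qd_def Vn cW_def
      by (intro sum_mono quad_neg) (auto simp: Wsym Wnn Xp Up)
    thus ?thesis by (subst sum.swap)
  qed
  have e1: "lin Bp X = (\<Sum>i\<in>UNIV. \<Sum>j\<in>UNIV. X$i$j * Bp$i$j)" by (simp add: lin_def)
  have e2: "lin Bn X = (\<Sum>i\<in>UNIV. \<Sum>j\<in>UNIV. X$i$j * Bn$i$j)" by (simp add: lin_def)
  have e3: "qa Ap X = (\<Sum>i\<in>UNIV. \<Sum>j\<in>UNIV. cAp i j * X$i$j)"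
    unfolding qa_def cAp_def by (simp add: sum_distrib_left sum_distrib_right mult_ac)
  have e4: "qa An X = (\<Sum>i\<in>UNIV. \<Sum>j\<in>UNIV. cAn i j * X$i$j)"
    unfolding qa_def cAn_def by (simp add: sum_distrib_left sum_distrib_right mult_ac)
  have e5: "qd Dg X = (\<Sum>i\<in>UNIV. \<Sum>j\<in>UNIV. cD i j * X$i$j)"
  proof -
    have "qd Dg X = (\<Sum>j\<in>UNIV. \<Sum>i\<in>UNIV. cD i j * X$i$j)"
      unfolding qd_def cD_def by (simp add: sum_distrib_left mult_ac)
    also have "\<dots> = (\<Sum>i\<in>UNIV. \<Sum>j\<in>UNIV. cD i j * X$i$j)" by (rule sum.swap)
    finally show ?thesis .
  qed
  have e6: "qd W X = (\<Sum>i\<in>UNIV. \<Sum>j\<in>UNIV. cW i j * X$i$j)"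
  proof -
    have "qd W X = (\<Sum>j\<in>UNIV. \<Sum>i\<in>UNIV. cW i j * X$i$j)"
      unfolding qd_def cW_def by (simp add: sum_distrib_left mult_ac)
    also have "\<dots> = (\<Sum>i\<in>UNIV. \<Sum>j\<in>UNIV. cW i j * X$i$j)" by (rule sum.swap)
    finally show ?thesis .
  qed
  have F1: "tsF A1 A2 B1 B2 WP WQ lam Vn = -2 * lin Bp Vn + 2 * lin Bn Vn + qa Ap Vn - qa An Vn
      + lam * qd Dg Vn - lam * qd W Vn"
    unfolding tsF_expand Bp_def Bn_def Ap_def An_def Dg_def W_def ..
  have F0: "tsF A1 A2 B1 B2 WP WQ lam X = -2 * lin Bp X + 2 * lin Bn X + qa Ap X - qa An X
      + lam * qd Dg X - lam * qd W X"
    unfolding tsF_expand Bp_def Bn_def Ap_def An_def Dg_def W_def ..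
  define G where "G i j = -2 * (X$i$j * Bp$i$j * (1 + ln (U i j))) + 2 * (X$i$j * Bn$i$j * (((U i j)^2 + 1) / 2))
     + cAp i j * X$i$j * (U i j)^2 - cAn i j * X$i$j * (1 + 2 * ln (U i j))
     + lam * (cD i j * X$i$j * (U i j)^2) - lam * (cW i j * X$i$j * (1 + 2 * ln (U i j)))" for i j
  define H where "H i j = -2 * (X$i$j * Bp$i$j) + 2 * (X$i$j * Bn$i$j)
     + cAp i j * X$i$j - cAn i j * X$i$j
     + lam * (cD i j * X$i$j) - lam * (cW i j * X$i$j)" for i j
  have s1: "tsF A1 A2 B1 B2 WP WQ lam Vn \<le> (\<Sum>i\<in>UNIV. \<Sum>j\<in>UNIV. G i j)"
  proof -
    have "tsF A1 A2 B1 B2 WP WQ lam Vn \<le>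
        -2 * (\<Sum>i\<in>UNIV. \<Sum>j\<in>UNIV. X$i$j * Bp$i$j * (1 + ln (U i j)))
      + 2 * (\<Sum>i\<in>UNIV. \<Sum>j\<in>UNIV. X$i$j * Bn$i$j * (((U i j)^2 + 1) / 2))
      + (\<Sum>i\<in>UNIV. \<Sum>j\<in>UNIV. cAp i j * X$i$j * (U i j)^2)
      - (\<Sum>i\<in>UNIV. \<Sum>j\<in>UNIV. cAn i j * X$i$j * (1 + 2 * ln (U i j)))
      + lam * (\<Sum>i\<in>UNIV. \<Sum>j\<in>UNIV. cD i j * X$i$j * (U i j)^2)
      - lam * (\<Sum>i\<in>UNIV. \<Sum>j\<in>UNIV. cW i j * X$i$j * (1 + 2 * ln (U i j)))"
      using F1 b1 b2 b3 b4 mult_left_mono[OF b5 lam] mult_left_mono[OF b6 lam] by linarith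
    also have "\<dots> = (\<Sum>i\<in>UNIV. \<Sum>j\<in>UNIV. G i j)"
      unfolding G_def by (simp add: sum.distrib sum_subtractf sum_distrib_left sum_negf)
    finally show ?thesis .
  qed
  have s2: "(\<Sum>i\<in>UNIV. \<Sum>j\<in>UNIV. G i j) \<le> (\<Sum>i\<in>UNIV. \<Sum>j\<in>UNIV. H i j)"
  proof (intro sum_mono)
    fix i j
    have "G i j - H i j = X$i$j * (D$i$j * ((U i j)^2 - 1) - 2 * N$i$j * ln (U i j))"
      unfolding G_def H_def Dent Nent by (simp add: algebra_simps)
    moreover have "X$i$j * (D$i$j * ((U i j)^2 - 1) - 2 * N$i$j * ln (U i j)) \<le> 0"
      unfolding U_def using Xp Np Dp by (intro key_ineq) (auto simp: N_def D_def)
    ultimately show "G i j \<le> H i j" by linarith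
  qed
  have s3: "(\<Sum>i\<in>UNIV. \<Sum>j\<in>UNIV. H i j) = tsF A1 A2 B1 B2 WP WQ lam X"
    unfolding F0 e1 e2 e3 e4 e5 e6 H_def by (simp add: sum.distrib sum_subtractf sum_distrib_left sum_negf)
  show ?thesis using s1 s2 s3 unfolding Vn_def by linarith
qed

lemma comp_tendsto: "V \<longlonglongrightarrow> Vs \<Longrightarrow> (\<lambda>t. V t $ a $ b) \<longlonglongrightarrow> Vs $ a $ b"
  by (intro tendsto_vec_nth)

lemma num_tendsto: "V \<longlonglongrightarrow> Vs \<Longrightarrow>
   (\<lambda>t. tsNum A1 A2 B1 B2 WP WQ lam (V t) $ i $ j) \<longlonglongrightarrow> tsNum A1 A2 B1 B2 WP WQ lam Vs $ i $ j"
  unfolding tsNum_def by (simp add: matrix_matrix_mult_def) (intro tendsto_intros comp_tendsto)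

lemma den_tendsto: "V \<longlonglongrightarrow> Vs \<Longrightarrow>
   (\<lambda>t. tsDen A1 A2 B1 B2 WP WQ lam (V t) $ i $ j) \<longlonglongrightarrow> tsDen A1 A2 B1 B2 WP WQ lam Vs $ i $ j"
  unfolding tsDen_def by (simp add: matrix_matrix_mult_def) (intro tendsto_intros comp_tendsto)

lemma pos_neg: "mpos M - mneg M = M"
  by (simp add: vec_eq_iff mpos_def mneg_def field_simps)

lemma mm_sub_l: "(A::real^'b^'a) ** (B - C) = A ** B - A ** C"
  by (simp add: matrix_matrix_mult_def vec_eq_iff algebra_simps sum_subtractf)
lemma mm_sub_r: "((B::real^'b^'a) - C) ** A = B ** A - C ** A"
  by (simp add: matrix_matrix_mult_def vec_eq_iff algebra_simps sum_subtractf)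
lemma mm_add_r: "((B::real^'b^'a) + C) ** A = B ** A + C ** A"
  by (simp add: matrix_matrix_mult_def vec_eq_iff algebra_simps sum.distrib)

lemma grad_entry:
  "((-2) *\<^sub>R B1 - 2 *\<^sub>R B2 + 2 *\<^sub>R (Vs ** (A1 + A2))
     + (2 * lam) *\<^sub>R ((degmat WP - WP + (degmat WQ - WQ)) ** Vs)) $ i $ j
   = 2 * (tsDen A1 A2 B1 B2 WP WQ lam Vs $ i $ j - tsNum A1 A2 B1 B2 WP WQ lam Vs $ i $ j)"
proof -
  have "tsDen A1 A2 B1 B2 WP WQ lam Vs - tsNum A1 A2 B1 B2 WP WQ lam Vs
      = - (mpos B1 - mneg B1) - (mpos B2 - mneg B2) + Vs ** ((mpos A1 - mneg A1) + (mpos A2 - mneg A2))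
        + lam *\<^sub>R ((degmat WP - WP + (degmat WQ - WQ)) ** Vs)"
    unfolding tsDen_def tsNum_def
    by (simp add: matrix_add_ldistrib mm_sub_l mm_add_r mm_sub_r
        scaleR_diff_right algebra_simps)
  hence "(tsDen A1 A2 B1 B2 WP WQ lam Vs - tsNum A1 A2 B1 B2 WP WQ lam Vs) $ i $ j
      = (- B1 - B2 + Vs ** (A1 + A2) + lam *\<^sub>R ((degmat WP - WP + (degmat WQ - WQ)) ** Vs)) $ i $ j"
    unfolding pos_neg by simp
  thus ?thesis by (simp add: algebra_simps)
qed

theorem theorem1:
  fixes A1 A2 :: "real^'k^'k" and B1 B2 :: "real^'k^'n"
    and WP WQ :: "real^'n^'n" and lam :: real
    and V :: "nat \<Rightarrow> real^'k^'n"
  assumes lam: "lam \<ge> 0"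
    and symA1: "transpose A1 = A1" and symA2: "transpose A2 = A2"
    and symWP: "transpose WP = WP" and symWQ: "transpose WQ = WQ"
    and nnWP: "\<forall>i j. WP $ i $ j \<ge> 0" and nnWQ: "\<forall>i j. WQ $ i $ j \<ge> 0"
    and V0: "\<forall>i j. V 0 $ i $ j > 0"
    and iter: "\<forall>t. V (Suc t) = tsUpd A1 A2 B1 B2 WP WQ lam (V t)"
    and num_pos: "\<forall>t i j. tsNum A1 A2 B1 B2 WP WQ lam (V t) $ i $ j > 0"
    and den_pos: "\<forall>t i j. tsDen A1 A2 B1 B2 WP WQ lam (V t) $ i $ j > 0"
  shows "(\<forall>t. tsF A1 A2 B1 B2 WP WQ lam (V (Suc t)) \<le> tsF A1 A2 B1 B2 WP WQ lam (V t))
    \<and> (\<forall>Vs. V \<longlonglongrightarrow> Vs \<longrightarrow> (\<forall>i j. tsDen A1 A2 B1 B2 WP WQ lam Vs $ i $ j > 0) \<longrightarrow>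
         (\<forall>i j. ((-2) *\<^sub>R B1 - 2 *\<^sub>R B2 + 2 *\<^sub>R (Vs ** (A1 + A2))
                  + (2 * lam) *\<^sub>R ((degmat WP - WP + (degmat WQ - WQ)) ** Vs)) $ i $ j
                * Vs $ i $ j = 0))"
proof -
  let ?N = "tsNum A1 A2 B1 B2 WP WQ lam" and ?D = "tsDen A1 A2 B1 B2 WP WQ lam"
  have upd: "V (Suc t) $ i $ j = V t $ i $ j * sqrt (?N (V t) $ i $ j / ?D (V t) $ i $ j)" for t i j
    using iter by (simp add: tsUpd_def)
  have Vpos: "\<forall>i j. V t $ i $ j > 0" for t
  proof (induction t)
    case 0 then show ?case using V0 by simp
  next
    case (Suc t)
    show ?case using Suc num_pos den_pos by (simp add: upd)
  qed
  have part1: "\<forall>t. tsF A1 A2 B1 B2 WP WQ lam (V (Suc t)) \<le> tsF A1 A2 B1 B2 WP WQ lam (V t)"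
  proof
    fix t
    show "tsF A1 A2 B1 B2 WP WQ lam (V (Suc t)) \<le> tsF A1 A2 B1 B2 WP WQ lam (V t)"
      unfolding iter[rule_format]
      using step[OF lam symA1 symA2 symWP symWQ nnWP nnWQ Vpos[of t]] num_pos den_pos by blast
  qed
  have part2: "\<forall>i j. ((-2) *\<^sub>R B1 - 2 *\<^sub>R B2 + 2 *\<^sub>R (Vs ** (A1 + A2))
                  + (2 * lam) *\<^sub>R ((degmat WP - WP + (degmat WQ - WQ)) ** Vs)) $ i $ j
                * Vs $ i $ j = 0"
    if lim: "V \<longlonglongrightarrow> Vs" and dpos: "\<forall>i j. ?D Vs $ i $ j > 0" for Vs
  proof (intro allI)
    fix i j
    have c1: "(\<lambda>t. V (Suc t) $ i $ j) \<longlonglongrightarrow> Vs $ i $ j"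
      using comp_tendsto[OF lim] by (rule LIMSEQ_Suc)
    have c2: "(\<lambda>t. V t $ i $ j * sqrt (?N (V t) $ i $ j / ?D (V t) $ i $ j))
        \<longlonglongrightarrow> Vs $ i $ j * sqrt (?N Vs $ i $ j / ?D Vs $ i $ j)"
    proof (rule tendsto_mult[OF comp_tendsto[OF lim] tendsto_real_sqrt[OF tendsto_divide]])
      show "?D Vs $ i $ j \<noteq> 0" using dpos by (metis less_irrefl)
    qed (rule num_tendsto[OF lim], rule den_tendsto[OF lim])
    have eq: "Vs $ i $ j = Vs $ i $ j * sqrt (?N Vs $ i $ j / ?D Vs $ i $ j)"
      using LIMSEQ_unique[OF c1 c2[folded upd]] .
    have "?D Vs $ i $ j - ?N Vs $ i $ j = 0" if nz: "Vs $ i $ j \<noteq> 0"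
    proof -
      have "sqrt (?N Vs $ i $ j / ?D Vs $ i $ j) = 1" using eq nz by (metis mult_cancel_left1)
      hence "?N Vs $ i $ j / ?D Vs $ i $ j = 1" using real_sqrt_eq_1_iff by blast
      thus ?thesis using dpos by (simp add: divide_eq_1_iff)
    qed
    thus "((-2) *\<^sub>R B1 - 2 *\<^sub>R B2 + 2 *\<^sub>R (Vs ** (A1 + A2))
                  + (2 * lam) *\<^sub>R ((degmat WP - WP + (degmat WQ - WQ)) ** Vs)) $ i $ j
                * Vs $ i $ j = 0"
      unfolding grad_entry by (cases "Vs $ i $ j = 0") auto
  qed
  show ?thesis using part1 part2 by blast
qed

end
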